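(* Let $N$ be a positive integer, $x\in\mathbb{T}$ irrational, and $D=\{x,2x,\dots,Nx\}$. Then $\mathrm{Md}_{\mathbb{T}}(D)\le 1/(N+1)$, and there is no Borel set $A\subset\mathbb{T}$ with $(A-A)\cap D=\emptyset$ and $\mu(A)=1/(N+1)$.
   Context: $\mathbb{T}=\mathbb{R}/\mathbb{Z}$ with Haar probability measure $\mu$; "$x$ irrational" means $x\notin\mathbb{Q}/\mathbb{Z}$. $\mathrm{Md}_{\mathbb{T}}(D)=\sup\{\mu(A): A\subset\mathbb{T}\text{ Borel},\ (A-A)\cap D=\emptyset\}$. *)

theory Defs
  imports "HOL-Analysis.Analysis"
begin

text \<open>The circle group T = R/Z is modelled by its fundamental domain [0,1):
  a point of T is represented by its unique representative in [0,1), the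
  quotient map is frac, subtraction in T is frac (a - b), and the Haar
  probability measure is Lebesgue measure restricted to [0,1).\<close>

definition circ_diff_set :: "real set \<Rightarrow> real set" where
  "circ_diff_set A = {frac (a - b) | a b. a \<in> A \<and> b \<in> A}"

definition circ_avoiding :: "real set \<Rightarrow> real set \<Rightarrow> bool" where
  "circ_avoiding D A \<longleftrightarrow> A \<in> sets borel \<and> A \<subseteq> {0..<1} \<and> circ_diff_set A \<inter> D = {}"

definition Md_T :: "real set \<Rightarrow> real" where
  "Md_T D = Sup {measure lborel A | A. circ_avoiding D A}"

end

theory Submission
  imports Defs "HOL-Probability.Probability"
begin

definition rot :: "real \<Rightarrow> real set \<Rightarrow> real set" where
  "rot c A = {y \<in> {0..<1}. frac (y - c) \<in> A}"

lemma frac_eq_iff_Ints: "frac u = frac v \<longleftrightarrow> u - v \<in> \<int>"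
  by (metis frac_eq_0_iff frac_diff_zero frac_diff_eq)

lemma frac_frac_minus: "frac (frac p - q) = frac (p - q)"
proof -
  have "frac p - q = (p - q) + of_int (- \<lfloor>p\<rfloor>)" by (simp add: frac_def)
  then show ?thesis by (metis frac_add_of_int_right)
qed

lemma frac_frac_diff: "frac (frac p - frac q) = frac (p - q)"
  by (metis frac_diff_simp frac_frac_minus)

lemma rot_sets: "A \<in> sets borel \<Longrightarrow> rot c A \<in> sets borel"
proof -
  assume "A \<in> sets borel"
  have "rot c A = {0..<1} \<inter> (\<lambda>y. frac (y - c)) -` A" by (auto simp: rot_def)
  moreover have "(\<lambda>y::real. frac (y - c)) \<in> borel_measurable borel"
    unfolding frac_def by measurable
  ultimately show ?thesis using \<open>A \<in> sets borel\<close>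
    by (metis measurable_sets_borel sets.Int atLeastLessThan_borel)
qed

lemma rot_subset: "rot c A \<subseteq> {0..<1}" by (auto simp: rot_def)
lemma rot_0: "A \<subseteq> {0..<1} \<Longrightarrow> rot 0 A = A" by (auto simp: rot_def)
lemma rot_rot: "rot c (rot c' A) = rot (c + c') A"
  by (auto simp: rot_def frac_frac_minus frac_lt_1 diff_diff_eq)
lemma rot_int: "rot (c + of_int k) A = rot c A"
proof -
  have "\<And>y. y - (c + of_int k) = (y - c) + of_int (-k)" by simp
  then show ?thesis unfolding rot_def by (metis frac_add_of_int_right)
qed
lemma rot_diff: "rot c (X - Y) = rot c X - rot c Y" by (auto simp: rot_def)
lemma rot_Un: "rot c (X \<union> Y) = rot c X \<union> rot c Y" by (auto simp: rot_def)
lemma rot_Int: "rot c (X \<inter> Y) = rot c X \<inter> rot c Y" by (auto simp: rot_def)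

lemma fin01: "X \<subseteq> {0..<1::real} \<Longrightarrow> emeasure lborel X \<noteq> \<infinity>"
proof -
  assume "X \<subseteq> {0..<1::real}"
  then have "emeasure lborel X \<le> emeasure lborel {0..<1::real}"
    by (intro emeasure_mono) auto
  then show ?thesis by (auto simp: top_unique)
qed

lemma translate_measure:
  assumes "S \<in> sets borel"
  shows "measure lborel {y. y - f \<in> S} = measure lborel (S::real set)"
proof -
  have e: "{y. y - f \<in> S} = (+) f ` S" by (auto simp: image_iff) (metis add.commute diff_add_cancel)
  have "{y. y - f \<in> S} \<in> sets borel"
  proof -
    have "(\<lambda>y::real. y - f) \<in> borel_measurable borel" by measurable
    then show ?thesis using assms measurable_sets_borel[of "\<lambda>y::real. y - f" borel S]
      by (simp add: vimage_def)
  qed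
  then have "measure lborel {y. y - f \<in> S} = measure lebesgue {y. y - f \<in> S}" by simp
  also have "\<dots> = measure lebesgue S" unfolding e by (rule measure_translation)
  also have "\<dots> = measure lborel S" using assms by simp
  finally show ?thesis .
qed

lemma rot_measure:
  assumes A: "A \<in> sets borel" "A \<subseteq> {0..<1}"
  shows "measure lborel (rot c A) = measure lborel A"
proof -
  define f where "f = frac c"
  have f: "0 \<le> f" "f < 1" by (auto simp: f_def frac_lt_1)
  have "c = f + of_int \<lfloor>c\<rfloor>" by (simp add: f_def frac_def)
  then have r: "rot c A = rot f A" by (metis rot_int)
  define P1 where "P1 = {y. y - f \<in> A \<inter> {0..<1-f}}"
  define P2 where "P2 = {y. y - f + 1 \<in> A \<inter> {1-f..<1}}"
  have eq: "rot f A = P1 \<union> P2"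
  proof (rule set_eqI, rule iffI)
    fix y assume y: "y \<in> rot f A"
    then have y01: "0 \<le> y" "y < 1" and ya: "frac (y - f) \<in> A" by (auto simp: rot_def)
    show "y \<in> P1 \<union> P2"
    proof (cases "f \<le> y")
      case True
      then have "frac (y - f) = y - f" using y01 f by (simp add: frac_eq)
      then show ?thesis using ya True y01 by (auto simp: P1_def)
    next
      case False
      have "frac (y - f) = frac ((y - f + 1) + of_int (-1))" by simp
      also have "\<dots> = y - f + 1" using False y01 f by (simp only: frac_add_of_int_right) (simp add: frac_eq)
      finally have "y - f + 1 \<in> A" using ya by (simp only:)
      then show ?thesis using False y01 f by (auto simp: P2_def)
    qed
  next
    fix y assume "y \<in> P1 \<union> P2"
    then show "y \<in> rot f A"
    proof
      assume "y \<in> P1"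
      then have "y - f \<in> A" "0 \<le> y - f" "y - f < 1 - f" by (auto simp: P1_def)
      then show ?thesis using f by (auto simp: rot_def frac_eq)
    next
      assume "y \<in> P2"
      then have h: "y - f + 1 \<in> A" "1 - f \<le> y - f + 1" "y - f + 1 < 1" by (auto simp: P2_def)
      have "frac (y - f) = frac ((y - f + 1) + of_int (-1))" by simp
      also have "\<dots> = y - f + 1" using h f by (simp only: frac_add_of_int_right) (simp add: frac_eq)
      finally show ?thesis using h f by (auto simp: rot_def)
    qed
  qed
  have disj: "P1 \<inter> P2 = {}" by (auto simp: P1_def P2_def)
  have AB1: "A \<inter> {0..<1-f} \<in> sets borel" "A \<inter> {1-f..<1} \<in> sets borel" using A by auto
  have mP1: "measure lborel P1 = measure lborel (A \<inter> {0..<1-f})"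
    unfolding P1_def by (rule translate_measure[OF AB1(1)])
  have mP2: "measure lborel P2 = measure lborel (A \<inter> {1-f..<1})"
  proof -
    have "\<And>y::real. y - f + 1 = y - (f - 1)" by simp
    then show ?thesis unfolding P2_def using translate_measure[OF AB1(2), of "f - 1"] by (simp only:)
  qed
  have m1: "(\<lambda>y::real. y - f) \<in> borel_measurable borel"
    by (auto intro!: borel_measurable_continuous_onI continuous_intros)
  have m2: "(\<lambda>y::real. y - f + 1) \<in> borel_measurable borel"
    by (auto intro!: borel_measurable_continuous_onI continuous_intros)
  have sP: "P1 \<in> sets borel" "P2 \<in> sets borel"
    using measurable_sets_borel[OF m1 AB1(1)] measurable_sets_borel[OF m2 AB1(2)]
    unfolding P1_def P2_def by (simp_all add: vimage_def)
  have sub: "P1 \<subseteq> {0..<1}" "P2 \<subseteq> {0..<1}" using eq rot_subset by blast+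
  have "measure lborel (P1 \<union> P2) = measure lborel P1 + measure lborel P2"
    using disj sP fin01[OF sub(1)] fin01[OF sub(2)] by (intro measure_Union) auto
  also have "\<dots> = measure lborel (A \<inter> {0..<1-f}) + measure lborel (A \<inter> {1-f..<1})"
    using mP1 mP2 by simp
  also have "\<dots> = measure lborel ((A \<inter> {0..<1-f}) \<union> (A \<inter> {1-f..<1}))"
    using AB1 A fin01[of "A \<inter> {0..<1-f}"] fin01[of "A \<inter> {1-f..<1}"]
    by (intro measure_Union[symmetric]) auto
  also have "(A \<inter> {0..<1-f}) \<union> (A \<inter> {1-f..<1}) = A" using A by auto
  finally show ?thesis using r eq by simp
qed


lemma trans_lmeas:
  assumes "S \<in> lmeasurable"
  shows "{y. y - t \<in> S} \<in> lmeasurable" "measure lebesgue {y. y - t \<in> S} = measure lebesgue S"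
proof -
  have e: "{y. y - t \<in> S} = (+) t ` S" by (auto simp: image_iff) (metis add.commute diff_add_cancel)
  show "{y. y - t \<in> S} \<in> lmeasurable" unfolding e by (rule measurable_translation[OF assms])
  show "measure lebesgue {y. y - t \<in> S} = measure lebesgue S" unfolding e by (rule measure_translation)
qed

lemma lt_from_emeasure:
  assumes "S \<in> lmeasurable" "emeasure lebesgue S < ennreal e"
  shows "measure lebesgue S < e"
proof -
  have "emeasure lebesgue S = ennreal (measure lebesgue S)"
    using assms(1) by (simp add: emeasure_eq_ennreal_measure fmeasurable_def less_top[symmetric])
  then show ?thesis using assms(2)
    by (metis ennreal_less_iff measure_nonneg)
qed

lemma rot_cont:
  assumes A: "A \<in> sets borel" "A \<subseteq> {0..<1}" and "e > 0"
  shows "\<exists>\<delta>>0. \<forall>t. \<bar>t\<bar> < \<delta> \<longrightarrow> measure lborel ((A - rot t A) \<union> (rot t A - A)) \<le> 4 * e"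
proof -
  define E where "E = {y. frac y \<in> A} \<inter> {-1..2}"
  have "(\<lambda>y::real. frac (y - 0)) \<in> borel_measurable borel" unfolding frac_def by measurable
  then have "{y. frac (y - 0) \<in> A} \<in> sets borel" using measurable_sets_borel[OF _ A(1)] by (simp add: vimage_def)
  then have "{y. frac y \<in> A} \<in> sets borel" by simp
  then have Eb: "E \<in> sets borel" unfolding E_def by auto
  then have El: "E \<in> sets lebesgue" by simp
  obtain K where K: "closed K" "K \<subseteq> E" "E - K \<in> lmeasurable" "emeasure lebesgue (E - K) < ennreal e"
    using sets_lebesgue_inner_closed[OF El \<open>e > 0\<close>] by blast
  obtain V where V: "open V" "E \<subseteq> V" "V - E \<in> lmeasurable" "emeasure lebesgue (V - E) < ennreal e"
    using sets_lebesgue_outer_open[OF El \<open>e > 0\<close>] by blast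
  have "K \<subseteq> {-1..2}" using K(2) unfolding E_def by blast
  then have "bounded K" by (rule bounded_subset[OF bounded_closed_interval])
  then have "compact K" using K(1) by (simp add: compact_eq_bounded_closed)
  then obtain \<eta> where \<eta>: "\<eta> > 0" "(\<Union>x\<in>K. ball x \<eta>) \<subseteq> V"
    using compact_subset_open_imp_ball_epsilon_subset[OF \<open>compact K\<close> V(1)] K(2) V(2) by (metis order.trans)
  have mEK: "measure lebesgue (E - K) < e" using lt_from_emeasure K(3,4) .
  have mVE: "measure lebesgue (V - E) < e" using lt_from_emeasure V(3,4) .
  show ?thesis
  proof (intro exI[of _ "min \<eta> 1"] conjI allI impI)
    show "min \<eta> 1 > 0" using \<eta> by simp
    fix t :: real assume t: "\<bar>t\<bar> < min \<eta> 1"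
    define T1 where "T1 = {y. y - t \<in> V - E}"
    define T2 where "T2 = {y. y - t \<in> E - K}"
    have T: "T1 \<in> lmeasurable" "measure lebesgue T1 = measure lebesgue (V - E)"
            "T2 \<in> lmeasurable" "measure lebesgue T2 = measure lebesgue (E - K)"
      unfolding T1_def T2_def using trans_lmeas[OF V(3)] trans_lmeas[OF K(3)] by auto
    have inE: "y \<in> E \<longleftrightarrow> frac y \<in> A" if "-1 \<le> y" "y \<le> 2" for y using that by (auto simp: E_def)
    have sub: "(A - rot t A) \<union> (rot t A - A) \<subseteq> ((E - K) \<union> T1) \<union> (T2 \<union> (V - E))"
    proof
      fix y assume y: "y \<in> (A - rot t A) \<union> (rot t A - A)"
      then have "y \<in> {0..<1}" using A(2) rot_subset[of t A] by blast
      then have y01: "0 \<le> y" "y < 1" by auto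
      have yE: "y \<in> E \<longleftrightarrow> y \<in> A" using y01 inE[of y] by simp
      have ytE: "y - t \<in> E \<longleftrightarrow> y \<in> rot t A" using y01 t inE[of "y - t"] by (auto simp: rot_def)
      have dist: "dist y (y - t) < \<eta>" "dist (y - t) y < \<eta>" using t by (auto simp: dist_real_def)
      show "y \<in> ((E - K) \<union> T1) \<union> (T2 \<union> (V - E))"
      proof (cases "y \<in> A")
        case True
        then have "y \<in> E" "y - t \<notin> E" using y yE ytE by auto
        show ?thesis
        proof (cases "y \<in> K")
          case True
          moreover have "y - t \<in> ball y \<eta>" using dist(1) by (simp only: mem_ball)
          ultimately have "y - t \<in> V" using \<eta>(2) by blast
          then show ?thesis using \<open>y - t \<notin> E\<close> by (auto simp: T1_def)
        qed (use \<open>y \<in> E\<close> in auto)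
      next
        case False
        then have "y \<notin> E" "y - t \<in> E" using y yE ytE by auto
        show ?thesis
        proof (cases "y - t \<in> K")
          case True
          moreover have "y \<in> ball (y - t) \<eta>" using dist(2) by (simp only: mem_ball)
          ultimately have "y \<in> V" using \<eta>(2) by blast
          then show ?thesis using \<open>y \<notin> E\<close> by auto
        qed (use \<open>y - t \<in> E\<close> in \<open>auto simp: T2_def\<close>)
      qed
    qed
    have Lb: "(A - rot t A) \<union> (rot t A - A) \<in> sets borel" using A rot_sets[OF A(1)] by auto
    have fm: "((E - K) \<union> T1) \<union> (T2 \<union> (V - E)) \<in> lmeasurable" using T K V by auto
    have "measure lborel ((A - rot t A) \<union> (rot t A - A)) = measure lebesgue ((A - rot t A) \<union> (rot t A - A))"
      using Lb by simp
    also have "\<dots> \<le> measure lebesgue (((E - K) \<union> T1) \<union> (T2 \<union> (V - E)))"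
      using sub fm Lb by (intro measure_mono_fmeasurable) auto
    also have "\<dots> \<le> measure lebesgue ((E - K) \<union> T1) + measure lebesgue (T2 \<union> (V - E))"
      using T K V by (intro measure_Un_le) auto
    also have "\<dots> \<le> (measure lebesgue (E - K) + measure lebesgue T1) + (measure lebesgue T2 + measure lebesgue (V - E))"
      using T K V by (intro add_mono measure_Un_le) auto
    also have "\<dots> \<le> 4 * e" using T mEK mVE by simp
    finally show "measure lborel ((A - rot t A) \<union> (rot t A - A)) \<le> 4 * e" .
  qed
qed



lemma split_measure:
  fixes X Y :: "real set"
  assumes "X \<in> sets borel" "Y \<in> sets borel" "X \<subseteq> {0..<1}"
  shows "measure lborel X = measure lborel (X \<inter> Y) + measure lborel (X - Y)"
proof -
  have "measure lborel ((X \<inter> Y) \<union> (X - Y)) = measure lborel (X \<inter> Y) + measure lborel (X - Y)"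
    using assms fin01[of "X \<inter> Y"] fin01[of "X - Y"] by (intro measure_Union) auto
  moreover have "(X \<inter> Y) \<union> (X - Y) = X" by auto
  ultimately show ?thesis by simp
qed

lemma rot_disj:
  assumes D: "D = {frac (real k * x) | k. 1 \<le> k \<and> k \<le> N}"
    and av: "circ_avoiding D A" and ij: "i < j" "j - i \<le> N"
  shows "rot (real i * x) A \<inter> rot (real j * x) A = {}"
proof (rule ccontr)
  assume "rot (real i * x) A \<inter> rot (real j * x) A \<noteq> {}"
  then obtain y where y: "frac (y - real i * x) \<in> A" "frac (y - real j * x) \<in> A"
    by (auto simp: rot_def)
  have "frac (frac (y - real i * x) - frac (y - real j * x)) = frac ((y - real i * x) - (y - real j * x))"
    by (rule frac_frac_diff)
  also have "(y - real i * x) - (y - real j * x) = real (j - i) * x"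
    using ij by (simp add: of_nat_diff algebra_simps)
  finally have e: "frac (frac (y - real i * x) - frac (y - real j * x)) = frac (real (j - i) * x)" .
  have "frac (real (j - i) * x) \<in> D" using D ij by auto
  moreover have "frac (real (j - i) * x) \<in> circ_diff_set A"
    unfolding circ_diff_set_def using y e[symmetric] by blast
  ultimately show False using av by (auto simp: circ_avoiding_def)
qed

lemma part1:
  assumes D: "D = {frac (real k * x) | k. 1 \<le> k \<and> k \<le> N}"
    and av: "circ_avoiding D A"
  shows "(real N + 1) * measure lborel A = measure lborel (\<Union>j\<in>{..N}. rot (real j * x) A)"
    and "(\<Union>j\<in>{..N}. rot (real j * x) A) \<subseteq> {0..<1}"
    and "(\<Union>j\<in>{..N}. rot (real j * x) A) \<in> sets borel"
proof -
  have A: "A \<in> sets borel" "A \<subseteq> {0..<1}" using av by (auto simp: circ_avoiding_def)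
  have "measure lborel (\<Union>j\<in>{..N}. rot (real j * x) A) = (\<Sum>j\<in>{..N}. measure lborel (rot (real j * x) A))"
  proof (rule measure_finite_Union)
    show "disjoint_family_on (\<lambda>j. rot (real j * x) A) {..N}"
      unfolding disjoint_family_on_def
    proof (intro ballI impI)
      fix i j assume "i \<in> {..N}" "j \<in> {..N}" "i \<noteq> j"
      then show "rot (real i * x) A \<inter> rot (real j * x) A = {}"
      proof (cases "i < j")
        case True
        then show ?thesis using rot_disj[OF D av, of i j] \<open>j \<in> {..N}\<close> by auto
      next
        case False
        then have "j < i" "i - j \<le> N" using \<open>i \<noteq> j\<close> \<open>i \<in> {..N}\<close> by auto
        then show ?thesis using rot_disj[OF D av, of j i] by auto
      qed
    qed
  qed (use A rot_sets fin01[OF rot_subset] in auto)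
  also have "\<dots> = (\<Sum>j\<in>{..N}. measure lborel A)" using rot_measure[OF A] by simp
  finally show "(real N + 1) * measure lborel A = measure lborel (\<Union>j\<in>{..N}. rot (real j * x) A)" by simp
  show "(\<Union>j\<in>{..N}. rot (real j * x) A) \<subseteq> {0..<1}" using rot_subset by blast
  show "(\<Union>j\<in>{..N}. rot (real j * x) A) \<in> sets borel" using rot_sets[OF A(1)] by auto
qed

lemma measure_le1: "X \<subseteq> {0..<1::real} \<Longrightarrow> X \<in> sets borel \<Longrightarrow> measure lborel X \<le> 1"
proof -
  assume "X \<subseteq> {0..<1}" "X \<in> sets borel"
  moreover have "{0..<1::real} \<in> fmeasurable lborel" by (auto simp: fmeasurable_def)
  ultimately have "measure lborel X \<le> measure lborel {0..<1::real}"
    using measure_mono_fmeasurable[of X "{0..<1::real}" lborel] by auto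
  then show ?thesis by simp
qed

lemma bound:
  assumes "N > 0" and D: "D = {frac (real k * x) | k. 1 \<le> k \<and> k \<le> N}"
    and av: "circ_avoiding D A"
  shows "measure lborel A \<le> 1 / (real N + 1)"
proof -
  have "(real N + 1) * measure lborel A \<le> 1"
    using part1[OF D av] measure_le1 by simp
  then show ?thesis by (simp add: field_simps)
qed

definition dd :: "real set \<Rightarrow> real \<Rightarrow> real" where
  "dd A c = measure lborel ((A - rot c A) \<union> (rot c A - A))"

lemma dd_nonneg: "dd A c \<ge> 0" by (simp add: dd_def)

lemma dd_add:
  assumes A: "A \<in> sets borel" "A \<subseteq> {0..<1}"
  shows "dd A (c + c') \<le> dd A c + dd A c'"
proof -
  define S where "S = (A - rot c A) \<union> (rot c A - A)"
  define S' where "S' = (A - rot c' A) \<union> (rot c' A - A)"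
  have rS': "rot c S' = (rot c A - rot (c + c') A) \<union> (rot (c + c') A - rot c A)"
    unfolding S'_def by (simp add: rot_Un rot_diff rot_rot)
  have sub: "(A - rot (c + c') A) \<union> (rot (c + c') A - A) \<subseteq> S \<union> rot c S'"
    unfolding rS' S_def by blast
  have Sb: "S \<in> sets borel" "S' \<in> sets borel" unfolding S_def S'_def using A rot_sets[OF A(1)] by auto
  have S'01: "S' \<subseteq> {0..<1}" unfolding S'_def using A rot_subset by blast
  have rSb: "rot c S' \<in> sets borel" using rot_sets[OF Sb(2)] .
  have "dd A (c + c') \<le> measure lborel (S \<union> rot c S')"
    unfolding dd_def
  proof (rule measure_mono_fmeasurable[OF sub])
    show "(A - rot (c + c') A) \<union> (rot (c + c') A - A) \<in> sets lborel" using A rot_sets[OF A(1)] by auto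
    have "S \<union> rot c S' \<subseteq> {0..<1}" unfolding S_def using A rot_subset by blast
    then show "S \<union> rot c S' \<in> fmeasurable lborel"
      using Sb rSb fin01 by (auto simp: fmeasurable_def less_top)
  qed
  also have "\<dots> \<le> measure lborel S + measure lborel (rot c S')"
    using Sb rSb by (intro measure_Un_le) auto
  also have "measure lborel (rot c S') = measure lborel S'" using rot_measure[OF Sb(2) S'01] .
  finally show ?thesis unfolding dd_def S_def S'_def by simp
qed

lemma dd_0: "A \<subseteq> {0..<1} \<Longrightarrow> dd A 0 = 0"
  by (simp add: dd_def rot_0)

lemma dd_mult:
  assumes A: "A \<in> sets borel" "A \<subseteq> {0..<1}" and d: "dd A \<alpha> = 0"
  shows "dd A (real k * \<alpha>) = 0"
proof (induction k)
  case 0 then show ?case using dd_0[OF A(2)] by simp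
next
  case (Suc k)
  have "dd A (real (Suc k) * \<alpha>) = dd A (real k * \<alpha> + \<alpha>)" by (simp add: algebra_simps)
  also have "\<dots> \<le> dd A (real k * \<alpha>) + dd A \<alpha>" by (rule dd_add[OF A])
  finally show ?case using Suc d dd_nonneg[of A "real (Suc k) * \<alpha>"] by linarith
qed

lemma dd_all:
  assumes A: "A \<in> sets borel" "A \<subseteq> {0..<1}" and \<alpha>: "\<alpha> \<notin> \<rat>" and d: "dd A \<alpha> = 0"
  shows "dd A c = 0"
proof -
  have "dd A c \<le> 0 + e" if "e > 0" for e
  proof -
    obtain \<delta> where \<delta>: "\<delta> > 0" "\<And>t. \<bar>t\<bar> < \<delta> \<Longrightarrow> dd A t \<le> 4 * (e / 4)"
      using rot_cont[OF A, of "e / 4"] \<open>e > 0\<close> unfolding dd_def by auto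
    obtain h k where hk: "k > 0" "\<bar>of_int k * \<alpha> - of_int h - c\<bar> < \<delta>"
      using sequence_of_fractional_parts_is_dense[OF \<alpha> \<delta>(1), of c] by blast
    define t where "t = c - of_int k * \<alpha> + of_int h"
    have t: "\<bar>t\<bar> < \<delta>" using hk(2) unfolding t_def by linarith
    have kk: "of_int k * \<alpha> = real (nat k) * \<alpha>" using hk(1) by simp
    have c: "c = real (nat k) * \<alpha> + (t + of_int (- h))" using kk unfolding t_def by simp linarith
    have "dd A c \<le> dd A (real (nat k) * \<alpha>) + dd A (t + of_int (- h))"
      unfolding c by (rule dd_add[OF A])
    also have "dd A (t + of_int (- h)) = dd A t" unfolding dd_def by (simp only: rot_int)
    also have "dd A (real (nat k) * \<alpha>) = 0" by (rule dd_mult[OF A d])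
    finally show ?thesis using \<delta>(2)[OF t] by simp
  qed
  then have "dd A c \<le> 0" by (rule field_le_epsilon)
  then show ?thesis using dd_nonneg[of A c] by simp
qed


lemma meas_eq_ae:
  fixes X Y I :: "real set"
  assumes "X \<in> sets borel" "Y \<in> sets borel" "X \<subseteq> {0..<1}" "Y \<subseteq> {0..<1}" "I \<in> sets borel"
    and z: "measure lborel ((X - Y) \<union> (Y - X)) = 0"
  shows "measure lborel (X \<inter> I) = measure lborel (Y \<inter> I)"
proof -
  have fm: "(X - Y) \<union> (Y - X) \<in> fmeasurable lborel"
    using assms fin01[of "(X - Y) \<union> (Y - X)"] by (auto simp: fmeasurable_def less_top)
  have z1: "measure lborel (X \<inter> I - Y) = 0"
  proof -
    have "measure lborel (X \<inter> I - Y) \<le> measure lborel ((X - Y) \<union> (Y - X))"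
      using fm assms by (intro measure_mono_fmeasurable) auto
    then show ?thesis using z measure_nonneg[of lborel "X \<inter> I - Y"] by linarith
  qed
  have z2: "measure lborel (Y \<inter> I - X) = 0"
  proof -
    have "measure lborel (Y \<inter> I - X) \<le> measure lborel ((X - Y) \<union> (Y - X))"
      using fm assms by (intro measure_mono_fmeasurable) auto
    then show ?thesis using z measure_nonneg[of lborel "Y \<inter> I - X"] by linarith
  qed
  have "measure lborel (X \<inter> I) = measure lborel (X \<inter> I \<inter> Y) + measure lborel (X \<inter> I - Y)"
    using assms by (intro split_measure) auto
  moreover have "measure lborel (Y \<inter> I) = measure lborel (Y \<inter> I \<inter> X) + measure lborel (Y \<inter> I - X)"
    using assms by (intro split_measure) auto
  moreover have "X \<inter> I \<inter> Y = Y \<inter> I \<inter> X" by blast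
  ultimately show ?thesis using z1 z2 by simp
qed

lemma rot_interval:
  assumes "0 \<le> s" "0 \<le> t" "s + t \<le> 1"
  shows "rot s (A \<inter> {0..<t}) = rot s A \<inter> {s..<s+t}"
proof (rule set_eqI)
  fix y
  show "y \<in> rot s (A \<inter> {0..<t}) \<longleftrightarrow> y \<in> rot s A \<inter> {s..<s+t}"
  proof (cases "0 \<le> y \<and> y < 1")
    case True
    show ?thesis
    proof (cases "s \<le> y")
      case True
      then have "frac (y - s) = y - s" using \<open>0 \<le> y \<and> y < 1\<close> assms by (simp add: frac_eq)
      then show ?thesis using True \<open>0 \<le> y \<and> y < 1\<close> by (auto simp: rot_def)
    next
      case False
      have "frac (y - s) = frac ((y - s + 1) + of_int (-1))" by simp
      also have "\<dots> = y - s + 1" using False \<open>0 \<le> y \<and> y < 1\<close> assms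
        by (simp only: frac_add_of_int_right) (simp add: frac_eq)
      finally have "frac (y - s) \<ge> t" using False assms \<open>0 \<le> y \<and> y < 1\<close> by simp
      then show ?thesis using False by (auto simp: rot_def)
    qed
  qed (auto simp: rot_def)
qed

lemma inv_all_01:
  assumes A: "A \<in> sets borel" "A \<subseteq> {0..<1}" and d: "\<And>c. dd A c = 0"
  shows "measure lborel A = 0 \<or> measure lborel A = 1"
proof -
  define a where "a = measure lborel A"
  have a0g: "a \<ge> 0" unfolding a_def by simp
  define F where "F s = measure lborel (A \<inter> {0..<s})" for s :: real
  have Fadd: "F (s + t) = F s + F t" if st: "0 \<le> s" "0 \<le> t" "s + t \<le> 1" for s t
  proof -
    have "A \<inter> {0..<s+t} = (A \<inter> {0..<s}) \<union> (A \<inter> {s..<s+t})" using st by auto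
    then have "F (s + t) = measure lborel (A \<inter> {0..<s}) + measure lborel (A \<inter> {s..<s+t})"
      unfolding F_def using A fin01[of "A \<inter> {0..<s}"] fin01[of "A \<inter> {s..<s+t}"]
      by (subst measure_Union[symmetric]) auto
    moreover have "measure lborel (A \<inter> {s..<s+t}) = measure lborel (rot s A \<inter> {s..<s+t})"
      using meas_eq_ae[OF A(1) rot_sets[OF A(1)] A(2) rot_subset, of "{s..<s+t}" s] d[of s]
      by (auto simp: dd_def)
    moreover have "rot s A \<inter> {s..<s+t} = rot s (A \<inter> {0..<t})" using rot_interval[OF st] by simp
    moreover have "measure lborel (rot s (A \<inter> {0..<t})) = F t"
      unfolding F_def using A by (intro rot_measure) auto
    ultimately show ?thesis unfolding F_def by simp
  qed
  have "A \<inter> {0..<1} = A" using A(2) by blast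
  then have F1: "F 1 = a" unfolding F_def a_def by simp
  have Fmono: "F s \<le> F t" if "s \<le> t" for s t
    unfolding F_def using that A fin01[of "A \<inter> {0..<t}"]
    by (intro measure_mono_fmeasurable) (auto simp: fmeasurable_def less_top)
  have Fk: "F (real k / real n) = real k * F (1 / real n)" if "n > 0" "k \<le> n" for k n
    using that(2)
  proof (induction k)
    case 0 then show ?case by (simp add: F_def)
  next
    case (Suc k)
    have "F (real (Suc k) / real n) = F (real k / real n + 1 / real n)"
      by (simp add: add_divide_distrib add.commute)
    also have "\<dots> = F (real k / real n) + F (1 / real n)"
      using Suc.prems \<open>n > 0\<close> by (intro Fadd) (auto simp: add_divide_distrib[symmetric] divide_le_eq_1)
    finally show ?case using Suc by (simp add: algebra_simps)
  qed
  have Fkn: "F (real k / real n) = a * (real k / real n)" if "n > 0" "k \<le> n" for k n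
  proof -
    have "F (real n / real n) = real n * F (1 / real n)" using Fk[OF that(1) order.refl] .
    then have "F (1 / real n) = a / real n" using F1 that(1) by (simp add: field_simps)
    then show ?thesis using Fk[OF that] by simp
  qed
  have Flin: "F t = a * t" if t: "0 \<le> t" "t \<le> 1" for t
  proof -
    have bnd: "\<bar>F t - a * t\<bar> \<le> a / real n" if "n > 0" for n
    proof -
      define k where "k = nat \<lfloor>t * real n\<rfloor>"
      have k1: "real k \<le> t * real n" "t * real n < real k + 1" using t unfolding k_def
        by (auto simp: of_nat_nat)
      have "t * real n \<le> real n" using mult_right_mono[of t 1 "real n"] t by simp
      then have "real k \<le> real n" using k1(1) by linarith
      then have kn: "k \<le> n" by simp
      have a0: "a \<ge> 0" unfolding a_def by simp
      have lo: "F t \<ge> a * t - a / real n"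
      proof -
        have "real k / real n \<le> t" using k1(1) that by (simp add: divide_le_eq mult.commute)
        then have "F (real k / real n) \<le> F t" by (rule Fmono)
        moreover have "a * (real k / real n) \<ge> a * t - a / real n"
        proof -
          have "(t * real n - 1) / real n \<le> real k / real n" using k1(2) that by (intro divide_right_mono) auto
          moreover have "(t * real n - 1) / real n = t - 1 / real n" using that by (simp add: diff_divide_distrib)
          ultimately have "real k / real n \<ge> t - 1 / real n" by simp
          from mult_left_mono[OF this a0] show ?thesis by (simp add: right_diff_distrib)
        qed
        ultimately show ?thesis using Fkn[OF that kn] by linarith
      qed
      have hi: "F t \<le> a * t + a / real n"
      proof (cases "k + 1 \<le> n")
        case True
        have "(t * real n) / real n \<le> real (k + 1) / real n" using k1(2) that by (intro divide_right_mono) auto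
        then have "t \<le> real (k + 1) / real n" using that by simp
        then have "F t \<le> F (real (k + 1) / real n)" by (rule Fmono)
        moreover have "a * (real (k + 1) / real n) \<le> a * t + a / real n"
        proof -
          have "real (k + 1) / real n \<le> (t * real n + 1) / real n" using k1(1) that by (intro divide_right_mono) auto
          moreover have "(t * real n + 1) / real n = t + 1 / real n" using that by (simp add: add_divide_distrib)
          ultimately have "real (k + 1) / real n \<le> t + 1 / real n" by simp
          from mult_left_mono[OF this a0] show ?thesis by (simp add: distrib_left)
        qed
        ultimately show ?thesis using Fkn[OF that True] by linarith
      next
        case False
        then have "k = n" using kn by simp
        then have "t = 1" using k1(1) t that by (simp add: mult_le_cancel_right1)
        then show ?thesis using F1 a0 by simp
      qed
      show ?thesis using lo hi by linarith
    qed
    have "\<bar>F t - a * t\<bar> \<le> 0"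
    proof (rule ccontr)
      assume "\<not> \<bar>F t - a * t\<bar> \<le> 0"
      then have pos: "\<bar>F t - a * t\<bar> > 0" by simp
      obtain n :: nat where n: "a / \<bar>F t - a * t\<bar> < real n" using reals_Archimedean2 by blast
      have "a / \<bar>F t - a * t\<bar> \<ge> 0" using pos by (simp add: a_def)
      then have "real n > 0" using n by linarith
      then have "n > 0" by simp
      have "a / real n < \<bar>F t - a * t\<bar>" using n pos \<open>n > 0\<close> by (simp add: field_simps)
      then show False using bnd[OF \<open>n > 0\<close>] by linarith
    qed
    then show ?thesis by simp
  qed
  define M1 where "M1 = density lborel (indicator A)"
  define M2 where "M2 = density (density lborel (indicator {0..<1::real})) (\<lambda>_. ennreal a)"
  have e1: "emeasure M1 X = emeasure lborel (A \<inter> X)" if "X \<in> sets borel" for X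
    unfolding M1_def using that A by (subst emeasure_restricted) auto
  have e2: "emeasure M2 X = ennreal a * emeasure lborel ({0..<1} \<inter> X)" if "X \<in> sets borel" for X
    unfolding M2_def using that by (simp add: emeasure_density_const emeasure_restricted)
  have fb1: "finite_borel_measure M1"
    unfolding finite_borel_measure_def finite_borel_measure_axioms_def
  proof
    show "finite_measure M1"
      by (rule finite_measureI) (use e1[of UNIV] fin01[OF A(2)] in \<open>auto simp: M1_def\<close>)
  qed (simp add: M1_def)
  have fb2: "finite_borel_measure M2"
    unfolding finite_borel_measure_def finite_borel_measure_axioms_def
  proof
    have "emeasure lborel ({0..<1::real} \<inter> UNIV) \<noteq> \<infinity>" using fin01[of "{0..<1} \<inter> UNIV"] by auto
    then show "finite_measure M2"
      by (intro finite_measureI) (use e2[of UNIV] in \<open>auto simp: M2_def ennreal_mult_eq_top_iff\<close>)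
  qed (simp add: M2_def)
  have "cdf M1 = cdf M2"
  proof
    fix x :: real
    have m1: "measure M1 {..x} = measure lborel (A \<inter> {..x})"
      unfolding measure_def using e1[of "{..x}"] by simp
    have m2: "measure M2 {..x} = a * measure lborel ({0..<1} \<inter> {..x})"
      unfolding measure_def using e2[of "{..x}"] a0g by (simp add: enn2real_mult)
    have "measure lborel (A \<inter> {..x}) = a * measure lborel ({0..<1} \<inter> {..x})"
    proof (cases "x < 0")
      case True
      then have "A \<inter> {..x} = {}" "{0..<1} \<inter> {..x} = {}" using A(2) by auto
      then show ?thesis by simp
    next
      case False
      show ?thesis
      proof (cases "x < 1")
        case True
        have "A \<inter> {..x} = (A \<inter> {0..<x}) \<union> (A \<inter> {x})" using A(2) False by auto
        moreover have "measure lborel ((A \<inter> {0..<x}) \<union> (A \<inter> {x})) = measure lborel (A \<inter> {0..<x})"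
        proof -
          have "measure lborel ((A \<inter> {0..<x}) \<union> (A \<inter> {x})) \<le> measure lborel (A \<inter> {0..<x}) + measure lborel (A \<inter> {x})"
            using A by (intro measure_Un_le) auto
          moreover have "measure lborel (A \<inter> {x}) = 0"
          proof -
            have "measure lborel (A \<inter> {x}) \<le> measure lborel {x}"
              using A by (intro measure_mono_fmeasurable) (auto simp: fmeasurable_def)
            then show ?thesis using measure_nonneg[of lborel "A \<inter> {x}"] by simp
          qed
          moreover have "measure lborel (A \<inter> {0..<x}) \<le> measure lborel ((A \<inter> {0..<x}) \<union> (A \<inter> {x}))"
            using A fin01[of "(A \<inter> {0..<x}) \<union> (A \<inter> {x})"] by (intro measure_mono_fmeasurable) (auto simp: fmeasurable_def less_top)
          ultimately show ?thesis by linarith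
        qed
        moreover have "{0..<1} \<inter> {..x} = {0..x}" using True by auto
        ultimately show ?thesis using Flin[of x] False True unfolding F_def by simp
      next
        case False
        then have "A \<inter> {..x} = A" "{0..<1} \<inter> {..x} = {0..<1}" using A(2) by auto
        then show ?thesis unfolding a_def by simp
      qed
    qed
    then show "cdf M1 x = cdf M2 x" unfolding cdf_def using m1 m2 by simp
  qed
  then have "M1 = M2" using cdf_unique'[OF fb1 fb2] by simp
  then have "emeasure M1 A = emeasure M2 A" by simp
  then have "emeasure lborel A = ennreal a * emeasure lborel A"
    using e1[OF A(1)] e2[OF A(1)] A(2) by (simp add: Int_absorb1)
  moreover have "emeasure lborel A = ennreal a" unfolding a_def
    using fin01[OF A(2)] by (simp add: emeasure_eq_ennreal_measure)
  ultimately have "ennreal a = ennreal (a * a)" using a0g by (simp add: ennreal_mult)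
  then have "a = a * a" unfolding a_def by (subst (asm) ennreal_inj) auto
  then have "a * (a - 1) = 0" by (simp add: algebra_simps)
  then show ?thesis unfolding a_def by simp
qed


lemma ergodic_rot:
  assumes "A \<in> sets borel" "A \<subseteq> {0..<1}" "\<alpha> \<notin> \<rat>"
    and "measure lborel ((A - rot \<alpha> A) \<union> (rot \<alpha> A - A)) = 0"
  shows "measure lborel A = 0 \<or> measure lborel A = 1"
proof -
  have "dd A c = 0" for c using dd_all[OF assms(1,2,3)] assms(4) unfolding dd_def by blast
  then show ?thesis using inv_all_01[OF assms(1,2)] by blast
qed

theorem mainTheorem19:
  fixes N :: nat and x :: real and D :: "real set"
  assumes "N > 0"
    and "x \<notin> \<rat>"
    and "D = {frac (real k * x) | k. 1 \<le> k \<and> k \<le> N}"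
  shows "Md_T D \<le> 1 / (real N + 1) \<and>
         \<not> (\<exists>A. circ_avoiding D A \<and> measure lborel A = 1 / (real N + 1))"
proof
  have "circ_avoiding D {}" by (auto simp: circ_avoiding_def circ_diff_set_def)
  then show "Md_T D \<le> 1 / (real N + 1)"
    unfolding Md_T_def using bound[OF assms(1,3)] by (intro cSup_least) auto
next
  show "\<not> (\<exists>A. circ_avoiding D A \<and> measure lborel A = 1 / (real N + 1))"
  proof
    assume "\<exists>A. circ_avoiding D A \<and> measure lborel A = 1 / (real N + 1)"
    then obtain A where av: "circ_avoiding D A" and mA: "measure lborel A = 1 / (real N + 1)" by blast
    have A: "A \<in> sets borel" "A \<subseteq> {0..<1}" using av by (auto simp: circ_avoiding_def)
    define U where "U = (\<Union>j\<in>{..N}. rot (real j * x) A)"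
    note P = part1[OF assms(3) av, folded U_def]
    have mU: "measure lborel U = 1" using P(1) mA by simp
    define R where "R = rot (real (N + 1) * x) A"
    have R: "R \<in> sets borel" "R \<subseteq> {0..<1}" "measure lborel R = measure lborel A"
      unfolding R_def using rot_sets[OF A(1)] rot_subset rot_measure[OF A] by auto
    have "R - A \<subseteq> {0..<1} - U"
    proof
      fix y assume y: "y \<in> R - A"
      have "y \<notin> rot (real j * x) A" if "j \<in> {..N}" for j
      proof (cases "j = 0")
        case True then show ?thesis using y rot_0[OF A(2)] by simp
      next
        case False
        then have "j < N + 1" "N + 1 - j \<le> N" using that by auto
        then show ?thesis using rot_disj[OF assms(3) av, of j "N + 1"] y unfolding R_def by auto
      qed
      then show "y \<in> {0..<1} - U" using y R(2) unfolding U_def by auto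
    qed
    moreover have "measure lborel ({0..<1} - U) = 0"
      using P mU fin01[of "{0..<1}"] by (subst measure_Diff) auto
    ultimately have "measure lborel (R - A) \<le> measure lborel ({0..<1} - U)"
      using P(3) fin01[of "{0..<1} - U"] R(1) A(1)
      by (intro measure_mono_fmeasurable) (auto simp: fmeasurable_def less_top)
    then have m1: "measure lborel (R - A) = 0"
      using \<open>measure lborel ({0..<1} - U) = 0\<close> measure_nonneg[of lborel "R - A"] by linarith
    have m2: "measure lborel (A - R) = 0"
      using split_measure[OF A(1) R(1) A(2)] split_measure[OF R(1) A(1) R(2)] m1 R(3)
      by (simp add: Int_commute)
    have "measure lborel ((A - R) \<union> (R - A)) \<le> 0"
      using measure_Un_le[of "A - R" lborel "R - A"] A R m1 m2 by auto
    then have d0: "measure lborel ((A - R) \<union> (R - A)) = 0" by (simp add: measure_le_0_iff)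
    have "real (N + 1) * x \<notin> \<rat>"
    proof
      assume "real (N + 1) * x \<in> \<rat>"
      then have "real (N + 1) * x / real (N + 1) \<in> \<rat>" by (intro Rats_divide) auto
      then show False using assms(2) by simp
    qed
    from ergodic_rot[OF A this d0[unfolded R_def]] mA assms(1) show False by auto
  qed
qed

end
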